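(* Let $\{x_k\}$ be generated by the Subgradient-InexP method with Polyak's stepsize rule, under the standing assumptions (in particular $\Omega^*\neq\varnothing$). Then for every $x\in\Omega^*$ and every $k=0,1,\dots$, $$\|x_{k+1}-x\|^2\le\|x_k-x\|^2-\underline\beta\,\frac{[f(x_k)-f^*]^2}{\|s_k\|^2}.$$
   Context: Problem: minimize a convex $f:\mathbb{R}^n\to\mathbb{R}$ over a nonempty closed convex $C\subset\mathbb{R}^n$; $f^*:=\inf_{x\in C}f(x)$, $\Omega^*$ the set of minimizers. For $\epsilon\ge0$, $\partial_\epsilon f(x):=\{s: f(y)\ge f(x)+\langle s,y-x\rangle-\epsilon\ \forall y\}$. Relative error tolerance function: any $\varphi_{\gamma,\theta,\lambda}:(\mathbb{R}^n)^3\to[0,\infty)$ with $\varphi_{\gamma,\theta,\lambda}(u,v,w)\le\gamma\|v-u\|^2+\theta\|w-v\|^2+\lambda\|w-u\|^2$; for $u\in C$, $\mathcal{P}_C(\varphi_{\gamma,\theta,\lambda},u,v):=\{w\in C:\langle v-w,z-w\rangle\le\varphi_{\gamma,\theta,\lambda}(u,v,w)\ \forall z\in C\}$. Subgradient-InexP method: $x_0\in C$; at iteration $k$, if $0\in\partial f(x_k)$ stop; otherwise choose nonzero $s_k\in\partial_{\epsilon_k}f(x_k)$, stepsize $t_k>0$, and $x_{k+1}\in\mathcal{P}_C(\varphi_{\gamma_k,\theta_k,\lambda_k},x_k,x_k-t_ks_k)$. Standing assumptions: $\gamma_k\in[0,\bar\gamma)$, $\theta_k\in[0,\bar\theta)$,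 $\lambda_k\in[0,\bar\lambda)$ with $\bar\gamma\ge0$, $\bar\theta,\bar\lambda\in[0,1/2)$; the sequence is infinite. Let $\nu:=\frac{1+2\bar\gamma}{1-2\bar\lambda}$. Polyak's stepsize rule: $\Omega^*\neq\varnothing$, $f^*>-\infty$ known; $\mu\ge0$, $\underline\beta>0$, $\bar\beta>0$; $\{\epsilon_k\}$ nonincreasing, $0<\underline\beta\le\beta_k\le\bar\beta<\frac{1}{2\mu+\nu}$ and $0<\epsilon_k\le\mu\beta_k[f(x_k)-f^*]$ for all $k$; $t_k:=\beta_k\frac{f(x_k)-f^*}{\|s_k\|^2}$. *)

theory Defs
  imports "HOL-Analysis.Analysis"
begin

definition eps_subdiff :: "('a::real_inner \<Rightarrow> real) \<Rightarrow> real \<Rightarrow> 'a \<Rightarrow> 'a set" where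
  "eps_subdiff f \<epsilon> x = {s. \<forall>y. f y \<ge> f x + inner s (y - x) - \<epsilon>}"

definition rel_err_tol :: "real \<Rightarrow> real \<Rightarrow> real \<Rightarrow> ('a::real_normed_vector \<Rightarrow> 'a \<Rightarrow> 'a \<Rightarrow> real) \<Rightarrow> bool" where
  "rel_err_tol \<gamma> \<theta> l \<phi> \<longleftrightarrow>
     (\<forall>u v w. 0 \<le> \<phi> u v w \<and>
        \<phi> u v w \<le> \<gamma> * (norm (v - u))\<^sup>2 + \<theta> * (norm (w - v))\<^sup>2 + l * (norm (w - u))\<^sup>2)"

definition inexact_proj :: "'a::real_inner set \<Rightarrow> ('a \<Rightarrow> 'a \<Rightarrow> 'a \<Rightarrow> real) \<Rightarrow> 'a \<Rightarrow> 'a \<Rightarrow> 'a set" where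
  "inexact_proj C \<phi> u v = {w \<in> C. \<forall>z\<in>C. inner (v - w) (z - w) \<le> \<phi> u v w}"

end

theory Submission
  imports Defs
begin

lemma core:
  fixes u v w y :: "'a::real_inner"
  assumes A: "inner (v - w) (y - w) \<le> g * (norm (v - u))\<^sup>2 + th * (norm (w - v))\<^sup>2 + l * (norm (w - u))\<^sup>2"
    and B: "inner (v - w) (u - w) \<le> g * (norm (v - u))\<^sup>2 + th * (norm (w - v))\<^sup>2 + l * (norm (w - u))\<^sup>2"
    and g: "0 \<le> g" and th: "0 \<le> th" "th < 1/2" and l: "0 \<le> l" "l < 1/2"
  shows "(norm (w - y))\<^sup>2 \<le> (norm (v - y))\<^sup>2 + (1 + 2*g) / (1 - 2*l) * (norm (v - u))\<^sup>2 - (norm (v - u))\<^sup>2"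
proof -
  define P where "P = (norm (w - v))\<^sup>2"
  define Q where "Q = (norm (v - u))\<^sup>2"
  define R where "R = (norm (w - u))\<^sup>2"
  have P0: "P \<ge> 0" unfolding P_def by simp
  have e1: "(norm (w - y))\<^sup>2 = (norm (v - y))\<^sup>2 - P + 2 * inner (v - w) (y - w)"
    unfolding P_def power2_norm_eq_inner
    by (simp add: inner_diff_left inner_diff_right inner_commute algebra_simps)
  have e2: "2 * inner (v - w) (u - w) = P + R - Q"
    unfolding P_def Q_def R_def power2_norm_eq_inner
    by (simp add: inner_diff_left inner_diff_right inner_commute algebra_simps)
  have B': "(1 - 2*l) * R \<le> (1 + 2*g) * Q - (1 - 2*th) * P"
    using B e2 unfolding P_def[symmetric] Q_def[symmetric] R_def[symmetric] by (simp add: algebra_simps)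
  have h1: "(norm (w - y))\<^sup>2 \<le> (norm (v - y))\<^sup>2 - (1 - 2*th) * P + 2*g*Q + 2*l*R"
    using e1 A unfolding P_def[symmetric] Q_def[symmetric] R_def[symmetric] by (simp add: algebra_simps)
  have pos: "1 - 2*l > 0" using l by simp
  have h2: "(1 - 2*l) * (- (1 - 2*th) * P + 2*g*Q + 2*l*R) \<le> (2*g + 2*l) * Q"
  proof -
    have "2*l*((1 - 2*l) * R) \<le> 2*l*((1 + 2*g) * Q - (1 - 2*th) * P)"
      using B' l by (intro mult_left_mono) auto
    moreover have "(1 - 2*th) * P \<ge> 0" using th P0 by simp
    ultimately show ?thesis by (simp add: algebra_simps)
  qed
  have h3: "- (1 - 2*th) * P + 2*g*Q + 2*l*R \<le> (2*g + 2*l) * Q / (1 - 2*l)"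
    using h2 pos by (simp add: pos_le_divide_eq mult.commute)
  have "(1 + 2*g) / (1 - 2*l) * Q - Q = (2*g + 2*l) * Q / (1 - 2*l)"
    using pos by (simp add: field_simps)
  then show ?thesis using h1 h3 unfolding Q_def[symmetric] by linarith
qed


theorem mainTheorem7:
  fixes f :: "'a::euclidean_space \<Rightarrow> real"
    and C :: "'a set"
    and x s :: "nat \<Rightarrow> 'a"
    and t \<epsilon> \<beta> \<gamma> \<theta> lam :: "nat \<Rightarrow> real"
    and \<phi> :: "nat \<Rightarrow> 'a \<Rightarrow> 'a \<Rightarrow> 'a \<Rightarrow> real"
    and \<gamma>bar \<theta>bar lbar \<mu> \<beta>low \<beta>up fstar :: real
  assumes f_convex: "convex_on UNIV f"
    and C_closed: "closed C" and C_convex: "convex C" and C_ne: "C \<noteq> {}"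
    and fstar_def: "fstar = (INF y\<in>C. f y)"
    and Omega_ne: "{y \<in> C. \<forall>z\<in>C. f y \<le> f z} \<noteq> {}"
    and gbar: "0 \<le> \<gamma>bar"
    and tbar: "0 \<le> \<theta>bar" "\<theta>bar < 1/2"
    and lbar_bd: "0 \<le> lbar" "lbar < 1/2"
    and gam: "\<And>k. 0 \<le> \<gamma> k \<and> \<gamma> k < \<gamma>bar"
    and the: "\<And>k. 0 \<le> \<theta> k \<and> \<theta> k < \<theta>bar"
    and lam: "\<And>k. 0 \<le> lam k \<and> lam k < lbar"
    and phi: "\<And>k. rel_err_tol (\<gamma> k) (\<theta> k) (lam k) (\<phi> k)"
    and x0: "x 0 \<in> C"
    and nostop: "\<And>k. 0 \<notin> eps_subdiff f 0 (x k)"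
    and s_sub: "\<And>k. s k \<in> eps_subdiff f (\<epsilon> k) (x k)"
    and s_nz: "\<And>k. s k \<noteq> 0"
    and t_pos: "\<And>k. t k > 0"
    and step: "\<And>k. x (Suc k) \<in> inexact_proj C (\<phi> k) (x k) (x k - t k *\<^sub>R s k)"
    and mu: "0 \<le> \<mu>" and blow: "0 < \<beta>low" and bup: "0 < \<beta>up"
    and eps_mono: "decseq \<epsilon>"
    and beta: "\<And>k. \<beta>low \<le> \<beta> k \<and> \<beta> k \<le> \<beta>up"
    and bup_lt: "\<beta>up < 1 / (2 * \<mu> + (1 + 2 * \<gamma>bar) / (1 - 2 * lbar))"
    and eps: "\<And>k. 0 < \<epsilon> k \<and> \<epsilon> k \<le> \<mu> * \<beta> k * (f (x k) - fstar)"
    and polyak: "\<And>k. t k = \<beta> k * (f (x k) - fstar) / (norm (s k))\<^sup>2"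
  shows "\<forall>y \<in> {y \<in> C. \<forall>z\<in>C. f y \<le> f z}. \<forall>k.
           (norm (x (Suc k) - y))\<^sup>2
             \<le> (norm (x k - y))\<^sup>2 - \<beta>low * (f (x k) - fstar)\<^sup>2 / (norm (s k))\<^sup>2"
proof (intro ballI allI)
  fix y k
  assume yO: "y \<in> {y \<in> C. \<forall>z\<in>C. f y \<le> f z}"
  have xC: "x n \<in> C" for n
    by (induction n) (use x0 step in \<open>auto simp: inexact_proj_def\<close>)
  have yC: "y \<in> C" and ymin: "\<forall>z\<in>C. f y \<le> f z" using yO by auto
  have fs: "fstar = f y"
    unfolding fstar_def by (rule cInf_eq_minimum) (use yC ymin in auto)
  define u where "u = x k"
  define v where "v = x k - t k *\<^sub>R s k"
  define w where "w = x (Suc k)"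
  define F where "F = f (x k) - fstar"
  define S where "S = (norm (s k))\<^sup>2"
  have S0: "S > 0" unfolding S_def using s_nz by simp
  have wP: "w \<in> inexact_proj C (\<phi> k) u v" unfolding w_def u_def v_def by (rule step)
  have rt: "0 \<le> \<phi> k u v w \<and> \<phi> k u v w \<le> \<gamma> k * (norm (v - u))\<^sup>2 + \<theta> k * (norm (w - v))\<^sup>2 + lam k * (norm (w - u))\<^sup>2"
    using phi[of k] unfolding rel_err_tol_def by blast
  have A: "inner (v - w) (y - w) \<le> \<gamma> k * (norm (v - u))\<^sup>2 + \<theta> k * (norm (w - v))\<^sup>2 + lam k * (norm (w - u))\<^sup>2"
    using wP yC rt unfolding inexact_proj_def by force
  have B: "inner (v - w) (u - w) \<le> \<gamma> k * (norm (v - u))\<^sup>2 + \<theta> k * (norm (w - v))\<^sup>2 + lam k * (norm (w - u))\<^sup>2"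
    using wP xC[of k] rt unfolding inexact_proj_def u_def by force
  define N where "N = (1 + 2 * \<gamma> k) / (1 - 2 * lam k)"
  define \<nu> where "\<nu> = (1 + 2 * \<gamma>bar) / (1 - 2 * lbar)"
  have c: "(norm (w - y))\<^sup>2 \<le> (norm (v - y))\<^sup>2 + N * (norm (v - u))\<^sup>2 - (norm (v - u))\<^sup>2"
    unfolding N_def using core[OF A B] gam[of k] the[of k] lam[of k] tbar lbar_bd by linarith
  have vu: "(norm (v - u))\<^sup>2 = (t k)\<^sup>2 * S"
    unfolding v_def u_def S_def by (simp add: power_mult_distrib)
  have vy: "(norm (v - y))\<^sup>2 = (norm (u - y))\<^sup>2 - 2 * t k * inner (s k) (u - y) + (t k)\<^sup>2 * S"
    unfolding v_def u_def S_def power2_norm_eq_inner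
    by (simp add: inner_diff_left inner_diff_right inner_commute algebra_simps power2_eq_square)
  have sg: "inner (s k) (u - y) \<ge> F - \<epsilon> k"
  proof -
    have "f y \<ge> f u + inner (s k) (y - u) - \<epsilon> k"
      using s_sub[of k] unfolding eps_subdiff_def u_def by blast
    moreover have "inner (s k) (y - u) = - inner (s k) (u - y)"
      by (simp add: inner_diff_right)
    ultimately show ?thesis unfolding F_def fs u_def by linarith
  qed
  have Nle: "N \<le> \<nu>"
    unfolding N_def \<nu>_def using gam[of k] lam[of k] lbar_bd
    by (intro frac_le) auto
  have tk: "t k = \<beta> k * F / S" unfolding F_def S_def by (rule polyak)
  have b0: "\<beta> k > 0" using beta[of k] blow by linarith
  have Nb: "\<beta> k * (2 * \<mu> + \<nu>) \<le> 1"
  proof -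
    have "\<nu> > 0" unfolding \<nu>_def using gbar lbar_bd by (intro divide_pos_pos) auto
    then have "2 * \<mu> + \<nu> > 0" using mu by linarith
    then have "\<beta>up * (2 * \<mu> + \<nu>) < 1" using bup_lt unfolding \<nu>_def by (simp add: pos_less_divide_eq)
    moreover have "\<beta> k * (2 * \<mu> + \<nu>) \<le> \<beta>up * (2 * \<mu> + \<nu>)"
      using beta[of k] \<open>2 * \<mu> + \<nu> > 0\<close> by (intro mult_right_mono) auto
    ultimately show ?thesis by linarith
  qed
  have e: "\<epsilon> k \<le> \<mu> * \<beta> k * F" using eps[of k] unfolding F_def by blast
  have st: "(norm (w - y))\<^sup>2 \<le> (norm (u - y))\<^sup>2 - 2 * t k * (F - \<epsilon> k) + N * (t k)\<^sup>2 * S"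
  proof -
    have "2 * t k * (F - \<epsilon> k) \<le> 2 * t k * inner (s k) (u - y)"
      using sg t_pos[of k] by (intro mult_left_mono) auto
    then show ?thesis using c vu vy by (simp add: algebra_simps)
  qed
  have st2: "- 2 * t k * (F - \<epsilon> k) + N * (t k)\<^sup>2 * S \<le> - 2 * t k * F + 2 * t k * (\<mu> * \<beta> k * F) + \<nu> * (t k)\<^sup>2 * S"
  proof -
    have "t k * \<epsilon> k \<le> t k * (\<mu> * \<beta> k * F)" using e t_pos[of k] by (intro mult_left_mono) auto
    moreover have "N * ((t k)\<^sup>2 * S) \<le> \<nu> * ((t k)\<^sup>2 * S)" using Nle S0 by (intro mult_right_mono) auto
    ultimately show ?thesis by (simp add: algebra_simps)
  qed
  have eq: "- 2 * t k * F + 2 * t k * (\<mu> * \<beta> k * F) + \<nu> * (t k)\<^sup>2 * S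
      = - \<beta> k * (2 - \<beta> k * (2 * \<mu> + \<nu>)) * (F\<^sup>2 / S)"
    unfolding tk using S0 by (simp add: field_simps power2_eq_square)
  have fin: "- \<beta> k * (2 - \<beta> k * (2 * \<mu> + \<nu>)) * (F\<^sup>2 / S) \<le> - \<beta>low * (F\<^sup>2 / S)"
  proof -
    have q: "F\<^sup>2 / S \<ge> 0" using S0 by simp
    have "\<beta>low \<le> \<beta> k * (2 - \<beta> k * (2 * \<mu> + \<nu>))"
    proof -
      have "1 \<le> 2 - \<beta> k * (2 * \<mu> + \<nu>)" using Nb by linarith
      then have "\<beta> k * 1 \<le> \<beta> k * (2 - \<beta> k * (2 * \<mu> + \<nu>))" using b0 by (intro mult_left_mono) auto
      then show ?thesis using beta[of k] by linarith
    qed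
    then have "\<beta>low * (F\<^sup>2 / S) \<le> \<beta> k * (2 - \<beta> k * (2 * \<mu> + \<nu>)) * (F\<^sup>2 / S)"
      using q by (intro mult_right_mono) auto
    then show ?thesis by linarith
  qed
  show "(norm (x (Suc k) - y))\<^sup>2 \<le> (norm (x k - y))\<^sup>2 - \<beta>low * (f (x k) - fstar)\<^sup>2 / (norm (s k))\<^sup>2"
    using st st2 eq fin unfolding w_def u_def F_def[symmetric] S_def[symmetric] by simp
qed

end
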